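(* If $D$ is a quaternary near-extremal Hermitian self-dual code of length $36$ and $\alpha$ denotes the number of codewords of weight $12$ in $D$, then $\alpha=9\beta$ for some integer $\beta$ with $1\le\beta\le 7140$.
   Context: Let $\mathbb{F}_4=\{0,1,\omega,\omega^2\}$ with $\omega^2=\omega+1$. A quaternary code of length $n$ is a linear subspace of $\mathbb{F}_4^n$; it is Hermitian self-dual if it equals its dual with respect to $\langle x,y\rangle_H=\sum_k x_k y_k^2$. The weight of a vector is the number of nonzero coordinates. A quaternary Hermitian self-dual code of length $36$ is near-extremal if its minimum nonzero weight is $12$. *)

theory Defs
  imports Main
begin

text \<open>The field F_4 = {0, 1, w, w^2} with w^2 = w + 1 (characteristic 2).\<close>
datatype gf4 = G0 | G1 | Gw | Gw2

fun gf4_add :: "gf4 \<Rightarrow> gf4 \<Rightarrow> gf4" where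
  "gf4_add G0 y = y"
| "gf4_add x G0 = x"
| "gf4_add G1 G1 = G0" | "gf4_add G1 Gw = Gw2" | "gf4_add G1 Gw2 = Gw"
| "gf4_add Gw G1 = Gw2" | "gf4_add Gw Gw = G0" | "gf4_add Gw Gw2 = G1"
| "gf4_add Gw2 G1 = Gw" | "gf4_add Gw2 Gw = G1" | "gf4_add Gw2 Gw2 = G0"

fun gf4_mul :: "gf4 \<Rightarrow> gf4 \<Rightarrow> gf4" where
  "gf4_mul G0 y = G0"
| "gf4_mul x G0 = G0"
| "gf4_mul G1 y = y"
| "gf4_mul x G1 = x"
| "gf4_mul Gw Gw = Gw2" | "gf4_mul Gw Gw2 = G1"
| "gf4_mul Gw2 Gw = G1" | "gf4_mul Gw2 Gw2 = Gw"

text \<open>Vectors of F_4^n are lists of length n.\<close>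
definition vadd :: "gf4 list \<Rightarrow> gf4 list \<Rightarrow> gf4 list" where
  "vadd x y = map2 gf4_add x y"

definition smul :: "gf4 \<Rightarrow> gf4 list \<Rightarrow> gf4 list" where
  "smul a x = map (gf4_mul a) x"

definition linear_code :: "nat \<Rightarrow> gf4 list set \<Rightarrow> bool" where
  "linear_code n C \<longleftrightarrow>
     (\<forall>x\<in>C. length x = n) \<and> replicate n G0 \<in> C \<and>
     (\<forall>x\<in>C. \<forall>y\<in>C. vadd x y \<in> C) \<and> (\<forall>a. \<forall>x\<in>C. smul a x \<in> C)"

definition herm_ip :: "gf4 list \<Rightarrow> gf4 list \<Rightarrow> gf4" where
  "herm_ip x y = foldr gf4_add (map2 (\<lambda>a b. gf4_mul a (gf4_mul b b)) x y) G0"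

definition herm_dual :: "nat \<Rightarrow> gf4 list set \<Rightarrow> gf4 list set" where
  "herm_dual n C = {y. length y = n \<and> (\<forall>x\<in>C. herm_ip x y = G0)}"

definition herm_self_dual :: "nat \<Rightarrow> gf4 list set \<Rightarrow> bool" where
  "herm_self_dual n C \<longleftrightarrow> linear_code n C \<and> C = herm_dual n C"

definition wt :: "gf4 list \<Rightarrow> nat" where
  "wt x = length (filter (\<lambda>a. a \<noteq> G0) x)"

definition min_weight :: "nat \<Rightarrow> gf4 list set \<Rightarrow> nat \<Rightarrow> bool" where
  "min_weight n C d \<longleftrightarrow>
     (\<exists>c\<in>C. c \<noteq> replicate n G0 \<and> wt c = d) \<and>
     (\<forall>c\<in>C. c \<noteq> replicate n G0 \<longrightarrow> d \<le> wt c)"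

definition near_extremal_36 :: "gf4 list set \<Rightarrow> bool" where
  "near_extremal_36 D \<longleftrightarrow> herm_self_dual 36 D \<and> min_weight 36 D 12"

end

theory Submission
  imports Defs
begin

lemma gf4_cases: "x = G0 \<or> x = G1 \<or> x = Gw \<or> x = Gw2" by (cases x) auto
lemma UNIV_gf4: "(UNIV::gf4 set) = {G0,G1,Gw,Gw2}" using gf4_cases by auto

instance gf4 :: finite by standard (simp add: UNIV_gf4)

lemma sum_gf4: "(\<Sum>b\<in>(UNIV::gf4 set). f b) = f G0 + f G1 + f Gw + f Gw2"
  by (simp add: UNIV_gf4 add.assoc)

lemma add4: "gf4_add (gf4_add p q) (gf4_add r s) = gf4_add (gf4_add p r) (gf4_add q s)"
  by (cases p; cases q; cases r; cases s) auto
lemma mul_distrib: "gf4_mul (gf4_add a b) c = gf4_add (gf4_mul a c) (gf4_mul b c)"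
  by (cases a; cases b; cases c) auto
lemma mul_distrib2: "gf4_mul a (gf4_add b c) = gf4_add (gf4_mul a b) (gf4_mul a c)"
  by (cases a; cases b; cases c) auto
lemma mul_assoc: "gf4_mul (gf4_mul a b) c = gf4_mul a (gf4_mul b c)"
  by (cases a; cases b; cases c) auto
lemma add_G0r[simp]: "gf4_add a G0 = a" by (cases a) auto
lemma mul_G0r[simp]: "gf4_mul a G0 = G0" by (cases a) auto

fun chi :: "gf4 \<Rightarrow> int" where "chi G0 = 1" | "chi G1 = 1" | "chi Gw = -1" | "chi Gw2 = -1"
lemma chi_add: "chi (gf4_add a b) = chi a * chi b" by (cases a; cases b) auto

lemma herm_ip_Nil[simp]: "herm_ip [] y = G0" by (simp add: herm_ip_def)
lemma herm_ip_Nil2[simp]: "herm_ip x [] = G0" by (simp add: herm_ip_def)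
lemma herm_ip_Cons[simp]: "herm_ip (a#x) (b#y) = gf4_add (gf4_mul a (gf4_mul b b)) (herm_ip x y)"
  by (simp add: herm_ip_def)

lemma vadd_Cons[simp]: "vadd (a#x) (b#y) = gf4_add a b # vadd x y" by (simp add: vadd_def)
lemma vadd_Nil[simp]: "vadd [] y = []" "vadd x [] = []" by (simp_all add: vadd_def)
lemma smul_Cons[simp]: "smul a (b#x) = gf4_mul a b # smul a x" by (simp add: smul_def)
lemma smul_Nil[simp]: "smul a [] = []" by (simp add: smul_def)
lemma length_vadd[simp]: "length (vadd x y) = min (length x) (length y)" by (simp add: vadd_def)
lemma length_smul[simp]: "length (smul a x) = length x" by (simp add: smul_def)

lemma herm_ip_vadd: "length x = length y \<Longrightarrow> herm_ip (vadd x y) u = gf4_add (herm_ip x u) (herm_ip y u)"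
proof (induction x arbitrary: y u)
  case Nil then show ?case by simp
next
  case (Cons a x)
  then obtain b y' where y: "y = b # y'" by (cases y) auto
  show ?case
  proof (cases u)
    case Nil then show ?thesis by simp
  next
    case (Cons e u')
    then show ?thesis using Cons.IH[of y' u'] Cons.prems y by (simp add: mul_distrib add4)
  qed
qed

lemma herm_ip_smul: "herm_ip (smul a x) u = gf4_mul a (herm_ip x u)"
proof (induction x arbitrary: u)
  case Nil then show ?case by simp
next
  case (Cons b x)
  then show ?case by (cases u) (simp_all add: mul_distrib2 mul_assoc)
qed

definition Ls :: "nat \<Rightarrow> gf4 list set" where "Ls n = {u. length u = n}"

lemma finite_Ls[simp]: "finite (Ls n)"
proof -
  have "finite {xs. set xs \<subseteq> (UNIV::gf4 set) \<and> length xs = n}"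
    by (rule finite_lists_length_eq) simp
  then show ?thesis by (simp add: Ls_def)
qed

lemma Ls_0: "Ls 0 = {[]}" by (auto simp: Ls_def)

lemma sum_Ls_Suc: "(\<Sum>u\<in>Ls (Suc n). g u) = (\<Sum>b\<in>UNIV. \<Sum>u\<in>Ls n. g (b#u))"
proof -
  have eq: "Ls (Suc n) = (\<lambda>(b,u). b#u) ` (UNIV \<times> Ls n)"
  proof (rule set_eqI, rule iffI)
    fix v assume "v \<in> Ls (Suc n)"
    then obtain b u where "v = b#u" "length u = n" by (cases v) (auto simp: Ls_def)
    then show "v \<in> (\<lambda>(b,u). b#u) ` (UNIV \<times> Ls n)" by (auto simp: Ls_def)
  qed (auto simp: Ls_def)
  have inj: "inj_on (\<lambda>(b,u). b#u) (UNIV \<times> Ls n)" by (auto simp: inj_on_def)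
  have "(\<Sum>u\<in>Ls (Suc n). g u) = (\<Sum>p\<in>UNIV \<times> Ls n. g ((\<lambda>(b,u). b#u) p))"
    unfolding eq by (rule sum.reindex[OF inj, unfolded comp_def])
  also have "\<dots> = (\<Sum>b\<in>UNIV. \<Sum>u\<in>Ls n. g (b#u))"
    by (simp add: sum.cartesian_product) (rule sum.cong, auto split: prod.splits)
  finally show ?thesis .
qed

fun Pr :: "(gf4 \<Rightarrow> int) \<Rightarrow> gf4 list \<Rightarrow> int" where
  "Pr f [] = 1" | "Pr f (b#u) = f b * Pr f u"

definition hat :: "(gf4 \<Rightarrow> int) \<Rightarrow> gf4 \<Rightarrow> int" where
  "hat f a = (\<Sum>b\<in>UNIV. chi (gf4_mul a (gf4_mul b b)) * f b)"

lemma core: "length c = n \<Longrightarrow> (\<Sum>u\<in>Ls n. chi (herm_ip c u) * Pr f u) = Pr (hat f) c"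
proof (induction c arbitrary: n)
  case Nil then show ?case by (simp add: Ls_0)
next
  case (Cons a c)
  then obtain m where n: "n = Suc m" and lc: "length c = m" by auto
  have "(\<Sum>u\<in>Ls n. chi (herm_ip (a#c) u) * Pr f u)
      = (\<Sum>b\<in>UNIV. \<Sum>u\<in>Ls m. chi (herm_ip (a#c) (b#u)) * Pr f (b#u))"
    unfolding n by (rule sum_Ls_Suc)
  also have "\<dots> = (\<Sum>b\<in>UNIV. (chi (gf4_mul a (gf4_mul b b)) * f b) * (\<Sum>u\<in>Ls m. chi (herm_ip c u) * Pr f u))"
    by (simp add: chi_add sum_distrib_left mult_ac)
  also have "\<dots> = (\<Sum>b\<in>UNIV. chi (gf4_mul a (gf4_mul b b)) * f b) * Pr (hat f) c"
    using Cons.IH[OF lc] by (simp add: sum_distrib_right)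
  also have "\<dots> = hat f a * Pr (hat f) c" by (simp add: hat_def)
  finally show ?case by simp
qed

lemma hd_step: "(\<Sum>u\<in>Ls (Suc n). chi (herm_ip (a#c) u) * (f0 (hd u) * Pr f (tl u)))
   = hat f0 a * Pr (hat f) c" if "length c = n"
proof -
  have "(\<Sum>u\<in>Ls (Suc n). chi (herm_ip (a#c) u) * (f0 (hd u) * Pr f (tl u)))
     = (\<Sum>b\<in>UNIV. (chi (gf4_mul a (gf4_mul b b)) * f0 b) * (\<Sum>u\<in>Ls n. chi (herm_ip c u) * Pr f u))"
    by (simp add: sum_Ls_Suc chi_add sum_distrib_left mult_ac)
  also have "\<dots> = (\<Sum>b\<in>UNIV. chi (gf4_mul a (gf4_mul b b)) * f0 b) * Pr (hat f) c"
    using core[OF that] by (simp add: sum_distrib_right)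
  also have "\<dots> = hat f0 a * Pr (hat f) c" by (simp add: hat_def)
  finally show ?thesis .
qed


lemma vadd_vadd: "length c = length d \<Longrightarrow> vadd (vadd c d) d = c"
proof (induction c arbitrary: d)
  case Nil then show ?case by simp
next
  case (Cons a c) then show ?case
  proof (cases d)
    case (Cons b d')
    have "gf4_add (gf4_add a b) b = a" by (cases a; cases b) auto
    then show ?thesis using Cons.IH[of d'] Cons.prems \<open>d = b # d'\<close> by simp
  qed simp
qed

lemma hsd_D: assumes "herm_self_dual n D"
  shows "\<forall>x\<in>D. length x = n" "replicate n G0 \<in> D" "\<And>x y. x\<in>D \<Longrightarrow> y\<in>D \<Longrightarrow> vadd x y \<in> D"
    "\<And>a x. x\<in>D \<Longrightarrow> smul a x \<in> D" "D = herm_dual n D"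
  using assms unfolding herm_self_dual_def linear_code_def by simp_all

lemma finite_D: assumes "herm_self_dual n D" shows "finite D"
proof -
  have "D \<subseteq> Ls n" using hsd_D(1)[OF assms] by (auto simp: Ls_def)
  then show ?thesis using finite_subset finite_Ls by blast
qed

lemma charsum_out: assumes hsd: "herm_self_dual n D" and lu: "length u = n" and nu: "u \<notin> D"
  shows "(\<Sum>c\<in>D. chi (herm_ip c u)) = 0"
proof -
  have "u \<notin> herm_dual n D" using nu hsd_D(5)[OF hsd] by metis
  then obtain c0 where c0: "c0 \<in> D" "herm_ip c0 u \<noteq> G0" using lu by (auto simp: herm_dual_def)
  obtain s where s: "gf4_mul s (herm_ip c0 u) = Gw"
  proof (cases "herm_ip c0 u")
    case G0 then show ?thesis using c0(2) by simp
  next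
    case G1 then show ?thesis by (intro that[of Gw]) simp
  next
    case Gw then show ?thesis by (intro that[of G1]) simp
  next
    case Gw2 then show ?thesis by (intro that[of Gw2]) simp
  qed
  define d where "d = smul s c0"
  have dD: "d \<in> D" using hsd_D(4)[OF hsd c0(1)] by (simp add: d_def)
  have ipd: "herm_ip d u = Gw" using s by (simp add: d_def herm_ip_smul)
  have ld: "length d = n" using dD hsd_D(1)[OF hsd] by auto
  have "(\<Sum>c\<in>D. chi (herm_ip c u)) = (\<Sum>c\<in>D. - chi (herm_ip c u))"
  proof (rule sum.reindex_bij_witness[where i="\<lambda>c. vadd c d" and j="\<lambda>c. vadd c d"])
    fix a assume a: "a \<in> D"
    then have la: "length a = n" using hsd_D(1)[OF hsd] by auto
    show "vadd (vadd a d) d = a" using la ld by (simp add: vadd_vadd)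
    show "vadd a d \<in> D" using a dD hsd_D(3)[OF hsd] by blast
    show "vadd (vadd a d) d = a" using la ld by (simp add: vadd_vadd)
    show "vadd a d \<in> D" using a dD hsd_D(3)[OF hsd] by blast
    show "- chi (herm_ip (vadd a d) u) = chi (herm_ip a u)"
      using la ld ipd by (simp add: herm_ip_vadd chi_add)
  qed
  then show ?thesis by (simp add: sum_negf)
qed

lemma charsum_in: assumes hsd: "herm_self_dual n D" and u: "u \<in> D"
  shows "(\<Sum>c\<in>D. chi (herm_ip c u)) = int (card D)"
proof -
  have "u \<in> herm_dual n D" using u hsd_D(5)[OF hsd] by metis
  then have "\<forall>c\<in>D. herm_ip c u = G0" by (auto simp: herm_dual_def)
  then show ?thesis by simp
qed

lemma macw: assumes hsd: "herm_self_dual n D"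
  shows "(\<Sum>c\<in>D. \<Sum>u\<in>Ls n. chi (herm_ip c u) * g u) = int (card D) * (\<Sum>u\<in>D. g u)"
proof -
  have sub: "D \<subseteq> Ls n" using hsd_D(1)[OF hsd] by (auto simp: Ls_def)
  have "(\<Sum>c\<in>D. \<Sum>u\<in>Ls n. chi (herm_ip c u) * g u) = (\<Sum>u\<in>Ls n. g u * (\<Sum>c\<in>D. chi (herm_ip c u)))"
    by (subst sum.swap) (simp add: sum_distrib_left mult_ac)
  also have "\<dots> = (\<Sum>u\<in>Ls n. if u \<in> D then g u * int (card D) else 0)"
    by (rule sum.cong) (auto simp: charsum_in[OF hsd] charsum_out[OF hsd] Ls_def)
  also have "\<dots> = (\<Sum>u\<in>{u\<in>Ls n. u \<in> D}. g u * int (card D))"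
    by (simp add: sum.inter_filter)
  also have "{u\<in>Ls n. u \<in> D} = D" using sub by auto
  finally show ?thesis by (simp add: sum_distrib_right mult_ac)
qed

lemma macw36: assumes hsd: "herm_self_dual 36 D"
  shows "(\<Sum>c\<in>D. hat f0 (hd c) * Pr (hat f) (tl c)) = int (card D) * (\<Sum>u\<in>D. f0 (hd u) * Pr f (tl u))"
proof -
  have "(\<Sum>c\<in>D. hat f0 (hd c) * Pr (hat f) (tl c))
      = (\<Sum>c\<in>D. \<Sum>u\<in>Ls 36. chi (herm_ip c u) * (f0 (hd u) * Pr f (tl u)))"
  proof (rule sum.cong)
    fix c assume "c \<in> D"
    then have lc: "length c = Suc 35" using hsd_D(1)[OF hsd] by auto
    then obtain a c' where c: "c = a # c'" and lc': "length c' = 35" by (cases c) auto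
    show "hat f0 (hd c) * Pr (hat f) (tl c) = (\<Sum>u\<in>Ls 36. chi (herm_ip c u) * (f0 (hd u) * Pr f (tl u)))"
      using hd_step[OF lc', of a f0 f] by (simp add: c numeral_eq_Suc)
  qed simp
  also have "\<dots> = int (card D) * (\<Sum>u\<in>D. f0 (hd u) * Pr f (tl u))" by (rule macw[OF hsd])
  finally show ?thesis .
qed

lemma wt_Nil[simp]: "wt [] = 0" by (simp add: wt_def)
lemma wt_Cons[simp]: "wt (a#u) = (if a = G0 then wt u else Suc (wt u))" by (simp add: wt_def)
lemma wt_le: "wt u \<le> length u" by (induction u) auto
lemma wt0: "wt u = 0 \<longleftrightarrow> u = replicate (length u) G0" by (induction u) auto

lemma Pr_xy: "Pr (\<lambda>b. if b = G0 then p else q) u = p^(length u - wt u) * q^(wt u)"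
proof (induction u)
  case Nil then show ?case by simp
next
  case (Cons a u)
  have "wt u \<le> length u" by (rule wt_le)
  then show ?case using Cons by (auto simp: Suc_diff_le)
qed

lemma hat_xy: "hat (\<lambda>b. if b = G0 then p else q) = (\<lambda>a. if a = G0 then p + 3*q else p - q)"
proof
  fix a show "hat (\<lambda>b. if b = G0 then p else q) a = (if a = G0 then p + 3*q else p - q)"
    by (cases a) (simp_all add: hat_def sum_gf4)
qed

lemma macwxy: assumes hsd: "herm_self_dual 36 D"
  shows "(\<Sum>c\<in>D. (if hd c = G0 then z + 3*w else z - w) * ((x+3*y)^(35 - wt (tl c)) * (x-y)^(wt (tl c))))
     = int (card D) * (\<Sum>c\<in>D. (if hd c = G0 then z else w) * (x^(35 - wt (tl c)) * y^(wt (tl c))))"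
proof -
  have l: "\<And>c. c \<in> D \<Longrightarrow> length (tl c) = 35" using hsd_D(1)[OF hsd] by auto
  have "(\<Sum>c\<in>D. (if hd c = G0 then z + 3*w else z - w) * ((x+3*y)^(35 - wt (tl c)) * (x-y)^(wt (tl c))))
    = (\<Sum>c\<in>D. hat (\<lambda>b. if b = G0 then z else w) (hd c) * Pr (hat (\<lambda>b. if b = G0 then x else y)) (tl c))"
    by (rule sum.cong) (simp_all add: hat_xy Pr_xy l del: length_tl)
  also have "\<dots> = int (card D) * (\<Sum>c\<in>D. (\<lambda>b. if b = G0 then z else w) (hd c) * Pr (\<lambda>b. if b = G0 then x else y) (tl c))"
    by (rule macw36[OF hsd])
  also have "\<dots> = int (card D) * (\<Sum>c\<in>D. (if hd c = G0 then z else w) * (x^(35 - wt (tl c)) * y^(wt (tl c))))"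
    by (simp add: Pr_xy l del: length_tl)
  finally show ?thesis .
qed


definition zv :: "gf4 list" where "zv = replicate 36 G0"

lemma herm_ip_self: "herm_ip c c = (if even (wt c) then G0 else G1)"
proof (induction c)
  case Nil then show ?case by simp
next
  case (Cons a c) then show ?case by (cases a) auto
qed

lemma D_facts: assumes hsd: "herm_self_dual 36 D" and c: "c \<in> D"
  shows "length c = 36" "length (tl c) = 35" "c = hd c # tl c"
    "wt c = (if hd c = G0 then wt (tl c) else Suc (wt (tl c)))" "even (wt c)"
    "c = zv \<longleftrightarrow> hd c = G0 \<and> wt (tl c) = 0"
proof -
  show l: "length c = 36" using hsd_D(1)[OF hsd] c by auto
  then show "length (tl c) = 35" by simp
  from l show ct: "c = hd c # tl c" by (cases c) auto
  show "wt c = (if hd c = G0 then wt (tl c) else Suc (wt (tl c)))" by (subst ct) simp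
  have "c \<in> herm_dual 36 D" using c hsd_D(5)[OF hsd] by metis
  then have "herm_ip c c = G0" using c by (auto simp: herm_dual_def)
  then show "even (wt c)" by (simp add: herm_ip_self split: if_splits)
  have l2: "length (tl c) = 35" using l by simp
  show "c = zv \<longleftrightarrow> hd c = G0 \<and> wt (tl c) = 0"
  proof
    assume "c = zv" then show "hd c = G0 \<and> wt (tl c) = 0"
      by (simp add: zv_def numeral_eq_Suc wt_def)
  next
    assume h: "hd c = G0 \<and> wt (tl c) = 0"
    then have "tl c = replicate 35 G0" using wt0[of "tl c"] l2 by simp
    then have "c = G0 # replicate 35 G0" using ct h by simp
    then show "c = zv" by (simp add: zv_def numeral_eq_Suc)
  qed
qed

lemma cardD: assumes hsd: "herm_self_dual 36 D" shows "card D = 4^18"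
proof -
  have zD: "zv \<in> D" using hsd_D(2)[OF hsd] by (simp add: zv_def)
  have fD: "finite D" by (rule finite_D[OF hsd])
  have e: "(\<Sum>c\<in>D. (if hd c = G0 then 1 + 3*1 else 1 - 1) * ((1+3*1)^(35 - wt (tl c)) * (1-1)^(wt (tl c))))
     = int (card D) * (\<Sum>c\<in>D. (if hd c = G0 then 1 else 1) * (1^(35 - wt (tl c)) * (1::int)^(wt (tl c))))"
    by (rule macwxy[OF hsd])
  have "(\<Sum>c\<in>D. (if hd c = G0 then 1 + 3*1 else 1 - 1) * ((1+3*1)^(35 - wt (tl c)) * ((1::int)-1)^(wt (tl c))))
      = (\<Sum>c\<in>D. if c = zv then 4^36 else 0)"
  proof (rule sum.cong)
    fix c assume c: "c \<in> D"
    show "(if hd c = G0 then 1 + 3*1 else 1 - 1) * ((1+3*1)^(35 - wt (tl c)) * ((1::int)-1)^(wt (tl c)))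
      = (if c = zv then 4^36 else 0)"
      using D_facts(6)[OF hsd c] by auto
  qed simp
  also have "\<dots> = 4^36" using zD fD by simp
  finally have "int (card D) * int (card D) = 4^36" using e by simp
  then have "card D * card D = (4^18) * (4^18::nat)" by (simp flip: of_nat_mult)
  then have "card D ^ Suc 1 = (4^18) ^ Suc (1::nat)" by (simp only: power_Suc power_0 mult_1_right power_one_right)
  then show ?thesis by (rule power_inject_base) simp_all
qed

definition Gf :: "int \<Rightarrow> int \<Rightarrow> int \<Rightarrow> int \<Rightarrow> bool \<Rightarrow> nat \<Rightarrow> int" where
  "Gf x y z w t k = (if t then z + 3*w else z - w) * (x + 3*y)^(35 - k) * (x - y)^k
     - 4^18 * (if t then z else w) * x^(35 - k) * y^k"

lemma Geq: assumes hsd: "herm_self_dual 36 D"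
  shows "(\<Sum>c\<in>D. Gf x y z w (hd c = G0) (wt (tl c))) = 0"
proof -
  have "(\<Sum>c\<in>D. Gf x y z w (hd c = G0) (wt (tl c)))
     = (\<Sum>c\<in>D. (if hd c = G0 then z + 3*w else z - w) * ((x+3*y)^(35 - wt (tl c)) * (x-y)^(wt (tl c))))
       - 4^18 * (\<Sum>c\<in>D. (if hd c = G0 then z else w) * (x^(35 - wt (tl c)) * y^(wt (tl c))))"
    by (simp add: Gf_def sum_subtractf sum_distrib_left mult.assoc)
  then show ?thesis using macwxy[OF hsd, of z w x y] cardD[OF hsd] by simp
qed

definition Hc :: "(int * int * int * int * int) list \<Rightarrow> bool \<Rightarrow> nat \<Rightarrow> int" where
  "Hc cs t k = sum_list (map (\<lambda>(l,x,y,z,w). l * Gf x y z w t k) cs)"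

lemma comb: assumes "\<And>x y z w. (\<Sum>c\<in>D. Gf x y z w (P c) (K c)) = 0"
  shows "(\<Sum>c\<in>D. Hc cs (P c) (K c)) = 0"
proof (induction cs)
  case Nil then show ?case by (simp add: Hc_def)
next
  case (Cons q cs)
  obtain l x y z w where q: "q = (l,x,y,z,w)" by (cases q) auto
  have "(\<Sum>c\<in>D. Hc (q#cs) (P c) (K c)) = l * (\<Sum>c\<in>D. Gf x y z w (P c) (K c)) + (\<Sum>c\<in>D. Hc cs (P c) (K c))"
    by (simp add: Hc_def q sum.distrib sum_distrib_left)
  then show ?case using Cons assms by simp
qed

lemma mem_e: "even k \<Longrightarrow> 12 \<le> k \<Longrightarrow> k \<le> (35::nat) \<Longrightarrow> k \<in> set [12,14,16,18,20,22,24,26,28,30,32,34]"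
  by (simp; presburger)
lemma mem_o: "even (Suc k) \<Longrightarrow> 12 \<le> Suc k \<Longrightarrow> k \<le> (35::nat) \<Longrightarrow> k \<in> set [11,13,15,17,19,21,23,25,27,29,31,33,35]"
  by (simp; presburger)

definition cert1 :: "(int * int * int * int * int) list" where
  "cert1 = [(-80089458929957694315998172432348012672496552667441679000, 1, 0, 1, 0),
    (51766802741732442697535059358303045079480365684907945000, 1, 0, 0, 1),
    (24732886027309438406342774162370570416607081960, 0, 1, 1, 0),
    (3917005285749474610948812216383223248867519400, 0, 1, 0, 1),
    (-27034168544041859809498800965295949799205, -2, 1, 1, 0),
    (6868172266404609160005367429115423816355, -2, 1, 0, 1),
    (7535276453329207353208828070637615477, 1, 2, 1, 0),
    (3079042922275560174870383998884751053, 1, 2, 0, 1),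
    (-90003688248478891676313592563661316475, 2, 1, 1, 0),
    (-30279522219780577847856134455705328187075, 2, 1, 0, 1),
    (8384761508264513365785441603946450965, -1, 2, 1, 0),
    (-94101798483232239270178105381200915, -1, 2, 0, 1),
    (-4354872245013277225102003072764325, -3, 2, 1, 0),
    (858023034435073047164275448076675, -3, 2, 0, 1),
    (14677595303622397834113931583925, -2, 3, 1, 0),
    (-769313432583941283235128237075, -2, 3, 0, 1),
    (-861038005338364465127776598698725, 3, 2, 1, 0),
    (-4926714805590464318310813050142525, 3, 2, 0, 1),
    (13247966492921490543107748139275, 2, 3, 1, 0),
    (4534829809929606462101733755475, 2, 3, 0, 1),
    (18503293605457225570715240, 3, 4, 1, 0),
    (-43306354538527370868227800, 3, 4, 0, 1),
    (11093362020900709892820969192, 4, 3, 1, 0),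
    (-14553487889743423619592591192, 4, 3, 0, 1)]"

definition cert1_M :: int where "cert1_M = 126506477124102695751526243934934678457450066083840000000"

definition cert2 :: "(int * int * int * int * int) list" where
  "cert2 = [(-25823934726937943664333260667392793068126862607852977000, 1, 0, 1, 0),
    (908056281576209803918654702538947572885129480, 0, 1, 0, 1),
    (-5148009232340818837768032169800307200330, -2, 1, 1, 0),
    (2574004616170409418884016084900153600165, -2, 1, 0, 1),
    (713368090561139614805960501482476285, 1, 2, 1, 0),
    (1426736181122279229611921002964952570, 1, 2, 0, 1),
    (-9603431347015337057691806318859403508610, 2, 1, 1, 0),
    (-4801715673507668528845903159429701754305, 2, 1, 0, 1),
    (380955511409329156814502550125686577, -1, 2, 1, 0),
    (-761911022818658313629005100251373154, -1, 2, 0, 1),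
    (-684176987366555817701103817174725, -3, 2, 1, 0),
    (456117991577703878467402544783150, -3, 2, 0, 1),
    (1003412383522290193855797390150, -2, 3, 1, 0),
    (-1505118575283435290783696085225, -2, 3, 0, 1),
    (-1614956495089497643897688465224425, 3, 2, 1, 0),
    (-1076637663392998429265125643482950, 3, 2, 0, 1),
    (1544887899620623179502194109950, 2, 3, 1, 0),
    (2317331849430934769253291164925, 2, 3, 0, 1),
    (-6867871342471809930377544, 3, 4, 1, 0),
    (-9157161789962413240503392, 3, 4, 0, 1),
    (-3272823826993127621083772448, 4, 3, 1, 0),
    (-2454617870244845715812829336, 4, 3, 0, 1)]"

definition cert2_M :: int where "cert2_M = 13022725586304689268539466287419746311796330332160000000"

lemma c1a: "\<forall>k\<in>set [0,12,14,16,18,20,22,24,26,28,30,32,34]. Hc cert1 True k = cert1_M * (if k = 12 then 1 else 0)"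
  by (simp add: Hc_def Gf_def cert1_def cert1_M_def)
lemma c1b: "\<forall>k\<in>set [11,13,15,17,19,21,23,25,27,29,31,33,35]. Hc cert1 False k = cert1_M * (if k = 11 then -2 else 0)"
  by (simp add: Hc_def Gf_def cert1_def cert1_M_def)
lemma c2a: "\<forall>k\<in>set [0,12,14,16,18,20,22,24,26,28,30,32,34]. Hc cert2 True k = cert2_M * (if k = 0 then -771120 else if k = 12 then 12 else if k = 14 then 1 else 0)"
  by (simp add: Hc_def Gf_def cert2_def cert2_M_def)
lemma c2b: "\<forall>k\<in>set [11,13,15,17,19,21,23,25,27,29,31,33,35]. Hc cert2 False k = cert2_M * (if k = 11 then 12 else if k = 13 then 1 else 0)"
  by (simp add: Hc_def Gf_def cert2_def cert2_M_def)

lemma classes: assumes hsd: "herm_self_dual 36 D" and mw: "\<forall>c\<in>D. c \<noteq> zv \<longrightarrow> 12 \<le> wt c" and c: "c \<in> D"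
  shows "(hd c = G0 \<and> wt (tl c) \<in> set [0,12,14,16,18,20,22,24,26,28,30,32,34]) \<or>
         (hd c \<noteq> G0 \<and> wt (tl c) \<in> set [11,13,15,17,19,21,23,25,27,29,31,33,35])"
proof -
  note F = D_facts[OF hsd c]
  have kle: "wt (tl c) \<le> 35" using wt_le[of "tl c"] F(2) by simp
  show ?thesis
  proof (cases "hd c = G0")
    case True
    show ?thesis
    proof (cases "wt (tl c) = 0")
      case True then show ?thesis using \<open>hd c = G0\<close> by simp
    next
      case False
      then have "c \<noteq> zv" using F(6) by simp
      then have "12 \<le> wt (tl c)" "even (wt (tl c))" using mw c F(4,5) True by auto
      then show ?thesis using mem_e[OF _ _ kle] True by simp
    qed
  next
    case False
    then have "c \<noteq> zv" using F(6) by simp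
    then have "12 \<le> Suc (wt (tl c))" "even (Suc (wt (tl c)))" using mw c F(4,5) False by auto
    then show ?thesis using mem_o[OF _ _ kle] False by simp
  qed
qed

lemma H1: assumes hsd: "herm_self_dual 36 D" and mw: "\<forall>c\<in>D. c \<noteq> zv \<longrightarrow> 12 \<le> wt c" and c: "c \<in> D"
  shows "Hc cert1 (hd c = G0) (wt (tl c)) = cert1_M * (if wt c = 12 then (if hd c = G0 then 1 else -2) else 0)"
proof -
  have w: "wt c = (if hd c = G0 then wt (tl c) else Suc (wt (tl c)))" by (rule D_facts(4)[OF hsd c])
  from classes[OF hsd mw c] show ?thesis
  proof
    assume a: "hd c = G0 \<and> wt (tl c) \<in> set [0,12,14,16,18,20,22,24,26,28,30,32,34]"
    have "Hc cert1 True (wt (tl c)) = cert1_M * (if wt (tl c) = 12 then 1 else 0)"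
      using bspec[OF c1a conjunct2[OF a]] .
    then show ?thesis using a w by simp
  next
    assume a: "hd c \<noteq> G0 \<and> wt (tl c) \<in> set [11,13,15,17,19,21,23,25,27,29,31,33,35]"
    have "Hc cert1 False (wt (tl c)) = cert1_M * (if wt (tl c) = 11 then -2 else 0)"
      using bspec[OF c1b conjunct2[OF a]] .
    then show ?thesis using a w by simp
  qed
qed

lemma H2: assumes hsd: "herm_self_dual 36 D" and mw: "\<forall>c\<in>D. c \<noteq> zv \<longrightarrow> 12 \<le> wt c" and c: "c \<in> D"
  shows "Hc cert2 (hd c = G0) (wt (tl c)) = cert2_M * ((if c = zv then -771120 else 0) + (if wt c = 12 then 12 else 0) + (if wt c = 14 then 1 else 0))"
proof -
  have w: "wt c = (if hd c = G0 then wt (tl c) else Suc (wt (tl c)))" by (rule D_facts(4)[OF hsd c])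
  have z: "c = zv \<longleftrightarrow> hd c = G0 \<and> wt (tl c) = 0" by (rule D_facts(6)[OF hsd c])
  from classes[OF hsd mw c] show ?thesis
  proof
    assume a: "hd c = G0 \<and> wt (tl c) \<in> set [0,12,14,16,18,20,22,24,26,28,30,32,34]"
    have "Hc cert2 True (wt (tl c)) = cert2_M * (if wt (tl c) = 0 then -771120 else if wt (tl c) = 12 then 12 else if wt (tl c) = 14 then 1 else 0)"
      using bspec[OF c2a conjunct2[OF a]] .
    then show ?thesis using a w z by simp
  next
    assume a: "hd c \<noteq> G0 \<and> wt (tl c) \<in> set [11,13,15,17,19,21,23,25,27,29,31,33,35]"
    have "Hc cert2 False (wt (tl c)) = cert2_M * (if wt (tl c) = 11 then 12 else if wt (tl c) = 13 then 1 else 0)"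
      using bspec[OF c2b conjunct2[OF a]] .
    then show ?thesis using a w z by simp
  qed
qed


lemma sum_ind: "finite A \<Longrightarrow> (\<Sum>x\<in>A. if P x then (1::int) else 0) = int (card {x\<in>A. P x})"
  by (simp add: sum.inter_filter[symmetric])

lemma smul_hd: "c \<noteq> [] \<Longrightarrow> hd (smul a c) = gf4_mul a (hd c)" by (cases c) auto
lemma smul_wt: "a \<noteq> G0 \<Longrightarrow> wt (smul a c) = wt c"
proof (induction c)
  case Nil then show ?case by simp
next
  case (Cons b c)
  have "gf4_mul a b = G0 \<longleftrightarrow> b = G0" using Cons.prems by (cases a; cases b) auto
  then show ?case using Cons by simp
qed
lemma smul_smul: "smul a (smul b c) = smul (gf4_mul a b) c"
  by (induction c) (simp_all add: mul_assoc)
lemma mul_1l[simp]: "gf4_mul G1 a = a" by (cases a) auto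
lemma smul_1: "smul G1 c = c" by (induction c) simp_all

lemma scal3: assumes hsd: "herm_self_dual 36 D"
  shows "card {c\<in>D. wt c = 12 \<and> hd c \<noteq> G0} = 3 * card {c\<in>D. wt c = 12 \<and> hd c = G1}"
proof -
  define B1 where "B1 = {c\<in>D. wt c = 12 \<and> hd c = G1}"
  have fD: "finite D" by (rule finite_D[OF hsd])
  have ne: "\<And>c. c \<in> D \<Longrightarrow> c \<noteq> []" using hsd_D(1)[OF hsd] by fastforce
  have cl: "\<And>a c. c \<in> D \<Longrightarrow> smul a c \<in> D" using hsd_D(4)[OF hsd] by blast
  have fB1: "finite B1" using fD by (simp add: B1_def)
  have inj2: "inj_on (smul Gw2) B1" "inj_on (smul Gw) B1"
    by (rule inj_on_inverseI[where g="smul Gw"], simp add: smul_smul smul_1)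
       (rule inj_on_inverseI[where g="smul Gw2"], simp add: smul_smul smul_1)
  have eq: "{c\<in>D. wt c = 12 \<and> hd c \<noteq> G0} = B1 \<union> smul Gw ` B1 \<union> smul Gw2 ` B1"
  proof (rule set_eqI, rule iffI)
    fix c assume "c \<in> {c\<in>D. wt c = 12 \<and> hd c \<noteq> G0}"
    then have c: "c \<in> D" "wt c = 12" "hd c \<noteq> G0" by auto
    show "c \<in> B1 \<union> smul Gw ` B1 \<union> smul Gw2 ` B1"
    proof (cases "hd c")
      case G0 then show ?thesis using c by simp
    next
      case G1 then show ?thesis using c by (simp add: B1_def)
    next
      case Gw
      have "smul Gw2 c \<in> B1" using c Gw cl ne by (simp add: B1_def smul_wt smul_hd)
      moreover have "c = smul Gw (smul Gw2 c)" by (simp add: smul_smul smul_1)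
      ultimately show ?thesis by blast
    next
      case Gw2
      have "smul Gw c \<in> B1" using c Gw2 cl ne by (simp add: B1_def smul_wt smul_hd)
      moreover have "c = smul Gw2 (smul Gw c)" by (simp add: smul_smul smul_1)
      ultimately show ?thesis by blast
    qed
  next
    fix c assume "c \<in> B1 \<union> smul Gw ` B1 \<union> smul Gw2 ` B1"
    then show "c \<in> {c\<in>D. wt c = 12 \<and> hd c \<noteq> G0}"
      using cl ne by (auto simp: B1_def smul_wt smul_hd)
  qed
  have h1: "\<And>x. x \<in> B1 \<Longrightarrow> hd x = G1" by (simp add: B1_def)
  have h2: "\<And>x. x \<in> smul Gw ` B1 \<Longrightarrow> hd x = Gw" using ne by (auto simp: B1_def smul_hd)
  have h3: "\<And>x. x \<in> smul Gw2 ` B1 \<Longrightarrow> hd x = Gw2" using ne by (auto simp: B1_def smul_hd)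
  have d1: "B1 \<inter> smul Gw ` B1 = {}"
  proof (rule equals0I)
    fix x assume "x \<in> B1 \<inter> smul Gw ` B1"
    then have "hd x = G1" "hd x = Gw" using h1 h2 by blast+
    then show False by simp
  qed
  have d2: "(B1 \<union> smul Gw ` B1) \<inter> smul Gw2 ` B1 = {}"
  proof (rule equals0I)
    fix x assume x: "x \<in> (B1 \<union> smul Gw ` B1) \<inter> smul Gw2 ` B1"
    then have "hd x = Gw2" using h3 by blast
    moreover have "hd x = G1 \<or> hd x = Gw" using x h1 h2 by blast
    ultimately show False by auto
  qed
  have "card (B1 \<union> smul Gw ` B1 \<union> smul Gw2 ` B1) = card B1 + card (smul Gw ` B1) + card (smul Gw2 ` B1)"
    using fB1 d1 d2 by (simp add: card_Un_disjoint)
  also have "\<dots> = 3 * card B1" using inj2 by (simp add: card_image)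
  finally show ?thesis using eq by (simp add: B1_def)
qed

theorem fact5p6:
  assumes "near_extremal_36 D"
  shows "\<exists>\<beta>::nat. card {c \<in> D. wt c = 12} = 9 * \<beta> \<and> 1 \<le> \<beta> \<and> \<beta> \<le> 7140"
proof -
  have hsd: "herm_self_dual 36 D" and mwd: "min_weight 36 D 12"
    using assms by (auto simp: near_extremal_36_def)
  have mw: "\<forall>c\<in>D. c \<noteq> zv \<longrightarrow> 12 \<le> wt c" using mwd by (simp add: min_weight_def zv_def)
  obtain c12 where c12: "c12 \<in> D" "wt c12 = 12" using mwd by (auto simp: min_weight_def)
  have fD: "finite D" by (rule finite_D[OF hsd])
  have zD: "zv \<in> D" using hsd_D(2)[OF hsd] by (simp add: zv_def)
  have G: "\<And>x y z w. (\<Sum>c\<in>D. Gf x y z w (hd c = G0) (wt (tl c))) = 0" by (rule Geq[OF hsd])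
  have s1: "(\<Sum>c\<in>D. Hc cert1 (hd c = G0) (wt (tl c))) = 0" by (rule comb[OF G])
  have s2: "(\<Sum>c\<in>D. Hc cert2 (hd c = G0) (wt (tl c))) = 0" by (rule comb[OF G])
  define A0 where "A0 = {c\<in>D. wt c = 12 \<and> hd c = G0}"
  define B where "B = {c\<in>D. wt c = 12 \<and> hd c \<noteq> G0}"
  define A where "A = {c\<in>D. wt c = 12}"
  define A14 where "A14 = {c\<in>D. wt c = 14}"
  have "(\<Sum>c\<in>D. Hc cert1 (hd c = G0) (wt (tl c)))
      = (\<Sum>c\<in>D. cert1_M * ((if wt c = 12 \<and> hd c = G0 then 1 else 0) - 2 * (if wt c = 12 \<and> hd c \<noteq> G0 then 1 else 0)))"
    by (rule sum.cong) (simp_all add: H1[OF hsd mw])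
  also have "\<dots> = cert1_M * (\<Sum>c\<in>D. (if wt c = 12 \<and> hd c = G0 then 1 else 0) - 2 * (if wt c = 12 \<and> hd c \<noteq> G0 then 1 else 0))"
    by (simp add: sum_distrib_left)
  also have "\<dots> = cert1_M * (int (card A0) - 2 * int (card B))"
    by (simp add: sum_subtractf sum_distrib_left[symmetric] sum_ind fD A0_def B_def)
  finally have "card A0 = 2 * card B" using s1 by (simp add: cert1_M_def)
  moreover have "card A = card A0 + card B"
  proof -
    have "A = A0 \<union> B" "A0 \<inter> B = {}" by (auto simp: A_def A0_def B_def)
    moreover have "finite A0" "finite B" using fD by (auto simp: A0_def B_def)
    ultimately show ?thesis by (simp add: card_Un_disjoint)
  qed
  ultimately have cA: "card A = 9 * card {c\<in>D. wt c = 12 \<and> hd c = G1}"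
    using scal3[OF hsd] by (simp add: B_def)
  have "(\<Sum>c\<in>D. Hc cert2 (hd c = G0) (wt (tl c)))
      = cert2_M * ((\<Sum>c\<in>D. if c = zv then -771120 else 0) + 12 * (\<Sum>c\<in>D. if wt c = 12 then 1 else 0)
          + (\<Sum>c\<in>D. if wt c = 14 then 1 else 0))"
  proof -
    have "(\<Sum>c\<in>D. Hc cert2 (hd c = G0) (wt (tl c)))
      = (\<Sum>c\<in>D. cert2_M * ((if c = zv then -771120 else 0) + 12 * (if wt c = 12 then 1 else 0) + (if wt c = 14 then 1 else 0)))"
      by (rule sum.cong) (simp_all add: H2[OF hsd mw])
    also have "\<dots> = cert2_M * ((\<Sum>c\<in>D. if c = zv then -771120 else 0) + 12 * (\<Sum>c\<in>D. if wt c = 12 then 1 else 0)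
          + (\<Sum>c\<in>D. if wt c = 14 then 1 else 0))"
      by (simp add: sum_distrib_left[symmetric] sum.distrib)
    finally show ?thesis .
  qed
  also have "\<dots> = cert2_M * (-771120 + 12 * int (card A) + int (card A14))"
    using zD fD by (simp add: sum_ind A_def A14_def)
  finally have "12 * card A + card A14 = 771120" using s2 by (simp add: cert2_M_def)
  then have le: "card A \<le> 64260" by simp
  have "A \<noteq> {}" using c12 by (auto simp: A_def)
  moreover have "finite A" using fD by (simp add: A_def)
  ultimately have "card A \<ge> 1" by (simp add: Suc_le_eq card_gt_0_iff)
  then show ?thesis using cA le unfolding A_def
    by (intro exI[of _ "card {c\<in>D. wt c = 12 \<and> hd c = G1}"]) simp
qed

end
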